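(* Let $H=\ell^2(\mathbb{N})$ with its standard orthonormal basis, $K(H)$ the compact operators on $H$ represented by infinite matrices, and let $A=(a_{ij})\in\ell^\infty(\mathbb{N}^2)$ be such that $S_A(T)=A\circ T$ is a nonzero map $S_A\colon K(H)\to K(H)$. Then $S_A$ is multiplicative (i.e. $S_A(BC)=S_A(B)S_A(C)$ for all $B,C\in K(H)$) if and only if every column of $A$ is a scalar multiple of the first column of $A$ and $a_{ii}=1$ for all $i$.
   Context: $A\circ T$ is the entrywise product of $A$ with the matrix of $T$; $\ell^\infty(\mathbb{N}^2)$ denotes infinite matrices with uniformly bounded entries. *)

theory Defs
  imports Complex_Main
begin

text \<open>The standard orthonormal basis is
e_j = indicator of j, so an operator T on H is represented by the infinite matrix
t i j = <T e_j, e_i>, and (T x) i = sum_j t i j * x j.\<close>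

definition l2 :: "(nat \<Rightarrow> complex) set" where
  "l2 = {x. summable (\<lambda>i. (cmod (x i))^2)}"

definition l2norm :: "(nat \<Rightarrow> complex) \<Rightarrow> real" where
  "l2norm x = sqrt (\<Sum>i. (cmod (x i))^2)"

definition matvec :: "(nat \<Rightarrow> nat \<Rightarrow> complex) \<Rightarrow> (nat \<Rightarrow> complex) \<Rightarrow> nat \<Rightarrow> complex" where
  "matvec T x = (\<lambda>i. \<Sum>j. T i j * x j)"

definition bounded_matrix :: "(nat \<Rightarrow> nat \<Rightarrow> complex) \<Rightarrow> bool" where
  "bounded_matrix T \<longleftrightarrow>
     (\<forall>x\<in>l2. (\<forall>i. summable (\<lambda>j. T i j * x j)) \<and> matvec T x \<in> l2) \<and>
     (\<exists>C. \<forall>x\<in>l2. l2norm (matvec T x) \<le> C * l2norm x)"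

text \<open>Matrix of a compact operator on l2: bounded, and the image of every sequence in
the closed unit ball has a Cauchy (hence, l2 being complete, convergent) subsequence.\<close>
definition compact_matrix :: "(nat \<Rightarrow> nat \<Rightarrow> complex) \<Rightarrow> bool" where
  "compact_matrix T \<longleftrightarrow> bounded_matrix T \<and>
     (\<forall>s::nat \<Rightarrow> nat \<Rightarrow> complex. (\<forall>n. s n \<in> l2 \<and> l2norm (s n) \<le> 1) \<longrightarrow>
        (\<exists>r::nat \<Rightarrow> nat. strict_mono r \<and>
           (\<forall>e>0. \<exists>N. \<forall>m\<ge>N. \<forall>n\<ge>N.
              l2norm (\<lambda>i. matvec T (s (r m)) i - matvec T (s (r n)) i) < e)))"

definition KH :: "(nat \<Rightarrow> nat \<Rightarrow> complex) set" where
  "KH = {T. compact_matrix T}"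

definition matmul :: "(nat \<Rightarrow> nat \<Rightarrow> complex) \<Rightarrow> (nat \<Rightarrow> nat \<Rightarrow> complex) \<Rightarrow> nat \<Rightarrow> nat \<Rightarrow> complex" where
  "matmul B C = (\<lambda>i j. \<Sum>k. B i k * C k j)"

definition schur :: "(nat \<Rightarrow> nat \<Rightarrow> complex) \<Rightarrow> (nat \<Rightarrow> nat \<Rightarrow> complex) \<Rightarrow> nat \<Rightarrow> nat \<Rightarrow> complex" where
  "schur A T = (\<lambda>i j. A i j * T i j)"

end

theory Submission
  imports Defs "HOL-Analysis.Analysis"
begin

definition EU :: "nat \<Rightarrow> nat \<Rightarrow> nat \<Rightarrow> nat \<Rightarrow> complex" where
  "EU p q = (\<lambda>i j. if i = p \<and> j = q then 1 else 0)"

lemma suminf_single': "(\<Sum>r. if r = i then c else (0::'a::{t2_space,comm_monoid_add})) = c"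
  using sums_unique[OF sums_single[of i "\<lambda>_. c"]] by simp

lemma summable_single': "summable (\<lambda>r. if r = i then c else (0::'a::{t2_space,comm_monoid_add}))"
  using sums_single[of i "\<lambda>_. c"] summable_def by blast

lemma l2norm_single: "l2norm (\<lambda>i. if i = p then c else 0) = cmod c"
proof -
  have "(\<lambda>i. (cmod (if i = p then c else 0))^2) = (\<lambda>i. if i = p then (cmod c)^2 else 0)"
    by auto
  then show ?thesis unfolding l2norm_def by (simp add: suminf_single')
qed

lemma l2_single: "(\<lambda>i. if i = p then c else 0) \<in> l2"
proof -
  have "(\<lambda>i. (cmod (if i = p then c else 0))^2) = (\<lambda>i. if i = p then (cmod c)^2 else 0)"
    by auto
  then show ?thesis unfolding l2_def by (simp add: summable_single')
qed

lemma coord_le_l2norm: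
  assumes "x \<in> l2" shows "cmod (x q) \<le> l2norm x"
proof -
  have s: "summable (\<lambda>i. (cmod (x i))^2)" using assms l2_def by auto
  have "(\<Sum>i\<in>{q}. (cmod (x i))^2) \<le> (\<Sum>i. (cmod (x i))^2)"
    by (rule sum_le_suminf[OF s]) auto
  then have "(cmod (x q))^2 \<le> (\<Sum>i. (cmod (x i))^2)" by simp
  then have "sqrt ((cmod (x q))^2) \<le> l2norm x" unfolding l2norm_def
    using real_sqrt_le_mono by blast
  then show ?thesis by simp
qed

lemma EU_row: "(\<lambda>j. EU p q i j * x j) = (\<lambda>j. if j = q then (if i = p then x q else 0) else 0)"
  by (auto simp: EU_def)

lemma matvec_EU: "matvec (EU p q) x = (\<lambda>i. if i = p then x q else 0)"
  unfolding matvec_def EU_row by (auto simp: suminf_single')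

lemma EU_KH: "EU p q \<in> KH"
proof -
  have bm: "bounded_matrix (EU p q)"
    unfolding bounded_matrix_def
  proof (intro conjI ballI allI exI)
    fix x :: "nat \<Rightarrow> complex" and i
    show "summable (\<lambda>j. EU p q i j * x j)" unfolding EU_row by (rule summable_single')
  next
    fix x :: "nat \<Rightarrow> complex"
    show "matvec (EU p q) x \<in> l2" unfolding matvec_EU by (rule l2_single)
  next
    fix x :: "nat \<Rightarrow> complex" assume "x \<in> l2"
    then show "l2norm (matvec (EU p q) x) \<le> 1 * l2norm x"
      unfolding matvec_EU l2norm_single using coord_le_l2norm by simp
  qed
  have "\<exists>r::nat \<Rightarrow> nat. strict_mono r \<and>
           (\<forall>e>0. \<exists>N. \<forall>m\<ge>N. \<forall>n\<ge>N.
              l2norm (\<lambda>i. matvec (EU p q) (s (r m)) i - matvec (EU p q) (s (r n)) i) < e)"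
    if hs: "\<forall>n. s n \<in> l2 \<and> l2norm (s n) \<le> 1" for s
  proof -
    define z where "z = (\<lambda>n. s n q)"
    have "bounded (range z)"
    proof -
      have "\<forall>y\<in>range z. norm y \<le> 1"
        using hs coord_le_l2norm z_def by (force intro: order_trans)
      then show ?thesis unfolding bounded_iff by blast
    qed
    then obtain l r where r: "strict_mono r" "(z \<circ> r) \<longlonglongrightarrow> l"
      using bounded_imp_convergent_subsequence by blast
    then have "Cauchy (z \<circ> r)" using LIMSEQ_imp_Cauchy by blast
    then have C: "\<forall>e>0. \<exists>N. \<forall>m\<ge>N. \<forall>n\<ge>N. cmod (z (r m) - z (r n)) < e"
      unfolding Cauchy_def dist_norm by simp
    have eq: "(\<lambda>i. matvec (EU p q) (s (r m)) i - matvec (EU p q) (s (r n)) i)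
        = (\<lambda>i. if i = p then z (r m) - z (r n) else 0)" for m n
      unfolding matvec_EU z_def by auto
    have "\<forall>e>0. \<exists>N. \<forall>m\<ge>N. \<forall>n\<ge>N.
              l2norm (\<lambda>i. matvec (EU p q) (s (r m)) i - matvec (EU p q) (s (r n)) i) < e"
      using C by (simp only: eq l2norm_single)
    then show ?thesis using r(1) by blast
  qed
  then show ?thesis using bm unfolding KH_def compact_matrix_def by blast
qed

lemma matmul_EU: "matmul (schur A (EU i k)) (schur A (EU k j)) i j = A i k * A k j"
proof -
  have "(\<lambda>l. schur A (EU i k) i l * schur A (EU k j) l j) = (\<lambda>l. if l = k then A i k * A k j else 0)"
    by (auto simp: schur_def EU_def)
  then show ?thesis unfolding matmul_def by (simp add: suminf_single')
qed

lemma matmul_EU2: "matmul (EU i k) (EU k j) = EU i j"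
proof (intro ext)
  fix a b
  have "(\<lambda>l. EU i k a l * EU k j l b) = (\<lambda>l. if l = k then EU i j a b else 0)"
    by (auto simp: EU_def)
  then show "matmul (EU i k) (EU k j) a b = EU i j a b" unfolding matmul_def by (simp add: suminf_single')
qed

theorem theorem4p3:
  fixes A :: "nat \<Rightarrow> nat \<Rightarrow> complex"
  assumes bounded: "\<exists>M. \<forall>i j. cmod (A i j) \<le> M"
    and maps: "\<forall>T\<in>KH. schur A T \<in> KH"
    and nonzero: "\<exists>T\<in>KH. schur A T \<noteq> (\<lambda>i j. 0)"
  shows "(\<forall>B\<in>KH. \<forall>C\<in>KH. schur A (matmul B C) = matmul (schur A B) (schur A C))
     \<longleftrightarrow> ((\<forall>j. \<exists>c. \<forall>i. A i j = c * A i 0) \<and> (\<forall>i. A i i = 1))"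
proof
  assume M: "\<forall>B\<in>KH. \<forall>C\<in>KH. schur A (matmul B C) = matmul (schur A B) (schur A C)"
  have key: "A i j = A i k * A k j" for i j k
  proof -
    have "schur A (matmul (EU i k) (EU k j)) = matmul (schur A (EU i k)) (schur A (EU k j))"
      using M EU_KH by blast
    then have "schur A (matmul (EU i k) (EU k j)) i j = matmul (schur A (EU i k)) (schur A (EU k j)) i j"
      by simp
    then show ?thesis unfolding matmul_EU2 matmul_EU by (simp add: schur_def EU_def)
  qed
  have A00: "A 0 0 \<noteq> 0"
  proof
    assume z: "A 0 0 = 0"
    have "A i j = 0" for i j using key[of i j 0] key[of i 0 0] z by simp
    then have "schur A T = (\<lambda>i j. 0)" for T by (auto simp: schur_def)
    then show False using nonzero by blast
  qed
  have "A 0 0 = 1" using key[of 0 0 0] A00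
  proof -
    have "A 0 0 * A 0 0 = A 0 0 * 1" using key[of 0 0 0] by simp
    then show ?thesis using mult_left_cancel[OF A00] by blast
  qed
  then have inv: "A 0 k * A k 0 = 1" for k using key[of 0 0 k] by simp
  show "(\<forall>j. \<exists>c. \<forall>i. A i j = c * A i 0) \<and> (\<forall>i. A i i = 1)"
  proof (intro conjI allI)
    fix j show "\<exists>c. \<forall>i. A i j = c * A i 0"
    proof
      show "\<forall>i. A i j = A 0 j * A i 0"
      proof
        fix i
        have "A i j = A i 0 * A 0 j" by (rule key)
        then show "A i j = A 0 j * A i 0" by (simp only: mult.commute)
      qed
    qed
  next
    fix i show "A i i = 1" using key[of i i 0] inv[of i] by (simp add: mult.commute)
  qed
next
  assume R: "(\<forall>j. \<exists>c. \<forall>i. A i j = c * A i 0) \<and> (\<forall>i. A i i = 1)"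
  then have "\<forall>j. \<exists>c. \<forall>i. A i j = c * A i 0" by blast
  then obtain c where c: "\<And>i j. A i j = c j * A i 0" by (rule choice[THEN exE]) blast
  have d: "c i * A i 0 = 1" for i using R c[of i i] by simp
  have nz: "A i j \<noteq> 0" for i j
  proof -
    have "A i 0 \<noteq> 0" using d[of i] by auto
    moreover have "c j \<noteq> 0" using d[of j] by auto
    ultimately show ?thesis using c[of i j] by simp
  qed
  have prod: "A i k * A k j = A i j" for i j k
  proof -
    have "A i k * A k j = (c k * A k 0) * (c j * A i 0)" using c[of i k] c[of k j] by (simp add: ac_simps)
    also have "\<dots> = A i j" using d[of k] c[of i j] by (simp add: ac_simps)
    finally show ?thesis .
  qed
  show "\<forall>B\<in>KH. \<forall>C\<in>KH. schur A (matmul B C) = matmul (schur A B) (schur A C)"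
  proof (intro ballI ext)
    fix B C i j
    assume BC: "B \<in> KH" "C \<in> KH"
    have t: "(\<lambda>k. schur A B i k * schur A C k j) = (\<lambda>k. A i j * (B i k * C k j))"
    proof
      fix k
      have "A i k * B i k * (A k j * C k j) = (A i k * A k j) * (B i k * C k j)" by (simp only: ac_simps)
      then show "schur A B i k * schur A C k j = A i j * (B i k * C k j)"
        unfolding schur_def prod by simp
    qed
    show "schur A (matmul B C) i j = matmul (schur A B) (schur A C) i j"
    proof (cases "summable (\<lambda>k. B i k * C k j)")
      case True
      then show ?thesis unfolding matmul_def schur_def t[unfolded schur_def] by (simp add: suminf_mult)
    next
      case False
      from BC have bB: "bounded_matrix B" and bC: "bounded_matrix C"
        unfolding KH_def compact_matrix_def by auto
      have col: "matvec C (\<lambda>l. if l = j then 1 else 0) = (\<lambda>k. C k j)"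
      proof
        fix k
        have "(\<lambda>l. C k l * (if l = j then 1 else 0)) = (\<lambda>l. if l = j then C k j else 0)" by auto
        then show "matvec C (\<lambda>l. if l = j then 1 else 0) k = C k j"
          unfolding matvec_def by (simp add: suminf_single')
      qed
      have "matvec C (\<lambda>l. if l = j then 1 else 0) \<in> l2"
        using bC l2_single[of j 1] unfolding bounded_matrix_def by blast
      then have cl2: "(\<lambda>k. C k j) \<in> l2" by (simp only: col)
      have h: "\<forall>x\<in>l2. (\<forall>i. summable (\<lambda>j. B i j * x j))"
        using bB unfolding bounded_matrix_def by blast
      have "\<forall>i. summable (\<lambda>k. B i k * C k j)" using bspec[OF h cl2] by simp
      then have "summable (\<lambda>k. B i k * C k j)" by (rule spec)
      then show ?thesis using False by blast
    qed
  qed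
qed

end
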